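(* Consider any run of shadow moat growing on $(G,t)$ with final growth values $(y_S)$, and any forest $F$ in $G$. Then $$\sum_{S\subseteq V:\ S\odot F} y_S\ \le\ c(F)-\frac{\mathrm{UM}(F)}{2}.$$
   Context: $G=(V,E,c)$ is an undirected graph with edge costs $c\ge0$; $\delta(S)$ is the set of edges with exactly one endpoint in $S$; $c(F)=\sum_{e\in F}c_e$. Shadow moat growing on $(G,t)$, $t:V\to\mathbb{R}_{\ge0}$: continuous process in time maintaining a forest (initially empty), its components, and $y_S\ge0$ (initially $0$); at time $\tau$ a component $C$ is active iff some $w\in C$ has $t_w>\tau$, and each active $C$ increases $y_C$ at rate $1$; an edge $e$ between different components with $\sum_{S:e\in\delta(S)}y_S=c_e$ is added and the components merge; stop when nothing is active. In every run $\sum_{S:e\in\delta(S)}y_S\le c_e$ for all edges. For sets $S,A\subseteq V$, $S\odot A$ means $S\cap A\ne\emptyset$ and $A\not\subseteq S$; for a forest $F$, $S\odot F$ means $S\odot V(K)$ for at least one connected component $K$ of $F$. For a forest $F$: $\mathrm{UC}(F)=\sum_{e\in F}\big(c_e-\sum_{S:e\in\delta(S)}y_S\big)$; $\mathrm{MC}(F)=\sum_{S:\,|\delta(S)\cap F|\ge2}|\delta(S)\cap F|\,y_S$; $\mathrm{UM}(F)=\mathrm{UC}(F)+\mathrm{MC}(F)$. *)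

theory Defs
  imports Main "HOL-Library.Extended_Real"
begin

(* Graph: vertex set V :: 'a set, edge set E :: 'e set, endpoint map
   ends :: 'e => 'a set (each edge has exactly two endpoints in V),
   costs c :: 'e => real.  Parallel edges are allowed. *)

definition cut :: "('e \<Rightarrow> 'a set) \<Rightarrow> 'e set \<Rightarrow> 'a set \<Rightarrow> 'e set" where
  "cut ends E S = {e \<in> E. card (ends e \<inter> S) = 1}"

definition adj :: "('e \<Rightarrow> 'a set) \<Rightarrow> 'e set \<Rightarrow> ('a \<times> 'a) set" where
  "adj ends F = {(u, v). \<exists>e\<in>F. ends e = {u, v}}"

definition comp :: "'a set \<Rightarrow> ('e \<Rightarrow> 'a set) \<Rightarrow> 'e set \<Rightarrow> 'a \<Rightarrow> 'a set" where
  "comp V ends F v = {u \<in> V. (v, u) \<in> (adj ends F)\<^sup>*}"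

definition comps :: "'a set \<Rightarrow> ('e \<Rightarrow> 'a set) \<Rightarrow> 'e set \<Rightarrow> 'a set set" where
  "comps V ends F = comp V ends F ` V"

definition is_cycle :: "('e \<Rightarrow> 'a set) \<Rightarrow> 'e set \<Rightarrow> 'e list \<Rightarrow> 'a list \<Rightarrow> bool" where
  "is_cycle ends F es vs \<longleftrightarrow>
     es \<noteq> [] \<and> length vs = length es + 1 \<and> hd vs = last vs \<and>
     distinct es \<and> distinct (tl vs) \<and> set es \<subseteq> F \<and>
     (\<forall>i < length es. ends (es ! i) = {vs ! i, vs ! Suc i})"

definition is_forest :: "('e \<Rightarrow> 'a set) \<Rightarrow> 'e set \<Rightarrow> 'e set \<Rightarrow> bool" where
  "is_forest ends E F \<longleftrightarrow> F \<subseteq> E \<and> \<not> (\<exists>es vs. is_cycle ends F es vs)"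

definition load :: "'a set \<Rightarrow> ('e \<Rightarrow> 'a set) \<Rightarrow> 'e set \<Rightarrow> ('a set \<Rightarrow> real) \<Rightarrow> 'e \<Rightarrow> real" where
  "load V ends E y e = (\<Sum>S \<in> {S. S \<subseteq> V \<and> e \<in> cut ends E S}. y S)"

definition active :: "('a \<Rightarrow> real) \<Rightarrow> real \<Rightarrow> 'a set \<Rightarrow> bool" where
  "active t \<tau> C \<longleftrightarrow> (\<exists>w\<in>C. t w > \<tau>)"

definition crossing :: "'a set \<Rightarrow> ('e \<Rightarrow> 'a set) \<Rightarrow> 'e set \<Rightarrow> 'e \<Rightarrow> bool" where
  "crossing V ends F e \<longleftrightarrow> (\<exists>u v. ends e = {u, v} \<and> comp V ends F u \<noteq> comp V ends F v)"

(* Reachable states (time, current forest, current y) of shadow moat growing.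
   grow: all currently active components grow at rate 1 for duration d, during which
         no terminal deadline t_w is crossed (so the set of active components is constant),
         allowed only if no tight edge between different components is pending, and
         without violating any edge constraint (so it stops at the first moment an edge
         becomes tight);
   add:  a tight edge between different components is added (one at a time; ties in any order). *)
inductive smg_reach :: "'a set \<Rightarrow> 'e set \<Rightarrow> ('e \<Rightarrow> 'a set) \<Rightarrow> ('e \<Rightarrow> real) \<Rightarrow> ('a \<Rightarrow> real)
    \<Rightarrow> real \<Rightarrow> 'e set \<Rightarrow> ('a set \<Rightarrow> real) \<Rightarrow> bool"
  for V E ends c t where
  init: "smg_reach V E ends c t 0 {} (\<lambda>S. 0)"
| grow: "smg_reach V E ends c t \<tau> F y \<Longrightarrow> d \<ge> 0 \<Longrightarrow>
         (\<forall>w\<in>V. t w \<le> \<tau> \<or> t w \<ge> \<tau> + d) \<Longrightarrow>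
         \<not> (\<exists>e\<in>E. crossing V ends F e \<and> load V ends E y e = c e) \<Longrightarrow>
         y' = (\<lambda>S. if S \<in> comps V ends F \<and> active t \<tau> S then y S + d else y S) \<Longrightarrow>
         (\<forall>e\<in>E. load V ends E y' e \<le> c e) \<Longrightarrow>
         smg_reach V E ends c t (\<tau> + d) F y'"
| add: "smg_reach V E ends c t \<tau> F y \<Longrightarrow> e \<in> E \<Longrightarrow> crossing V ends F e \<Longrightarrow>
        load V ends E y e = c e \<Longrightarrow>
        smg_reach V E ends c t \<tau> (insert e F) y"

definition smg_final :: "'a set \<Rightarrow> 'e set \<Rightarrow> ('e \<Rightarrow> 'a set) \<Rightarrow> ('e \<Rightarrow> real) \<Rightarrow> ('a \<Rightarrow> real)
    \<Rightarrow> ('a set \<Rightarrow> real) \<Rightarrow> bool" where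
  "smg_final V E ends c t y \<longleftrightarrow>
     (\<exists>\<tau> Fr. smg_reach V E ends c t \<tau> Fr y \<and> (\<forall>C\<in>comps V ends Fr. \<not> active t \<tau> C))"

definition odot :: "'a set \<Rightarrow> 'a set \<Rightarrow> bool" where
  "odot S A \<longleftrightarrow> S \<inter> A \<noteq> {} \<and> \<not> A \<subseteq> S"

(* S \<odot> F for a forest F (components taken in (V, F); singleton components never qualify) *)
definition odotF :: "'a set \<Rightarrow> ('e \<Rightarrow> 'a set) \<Rightarrow> 'a set \<Rightarrow> 'e set \<Rightarrow> bool" where
  "odotF V ends S F \<longleftrightarrow> (\<exists>K\<in>comps V ends F. odot S K)"

definition UC where
  "UC V ends E c y F = (\<Sum>e\<in>F. c e - load V ends E y e)"

definition MC where
  "MC V ends E y F = (\<Sum>S \<in> {S. S \<subseteq> V \<and> card (cut ends E S \<inter> F) \<ge> 2}.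
                        real (card (cut ends E S \<inter> F)) * y S)"

definition UM where
  "UM V ends E c y F = UC V ends E c y F + MC V ends E y F"

end

theory Submission
  imports Defs
begin

lemma smg_inv:
  assumes "smg_reach V E ends c t \<tau> F y" and "\<forall>e\<in>E. c e \<ge> 0"
  shows "(\<forall>S. y S \<ge> 0) \<and> (\<forall>e\<in>E. load V ends E y e \<le> c e)"
  using assms
proof (induction rule: smg_reach.induct)
  case init
  then show ?case by (simp add: load_def)
next
  case (grow \<tau> F y d y')
  then show ?case by auto
next
  case (add \<tau> F y e)
  then show ?case by auto
qed

lemma cut_nonempty:
  assumes "odotF V ends S F" and that: "F \<subseteq> E"
  shows "cut ends E S \<inter> F \<noteq> {}"
proof -
  from assms obtain v where K: "odot S (comp V ends F v)"
    unfolding odotF_def comps_def by auto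
  then obtain u w where u: "u \<in> S" "(v,u) \<in> (adj ends F)\<^sup>*"
    and w: "w \<notin> S" "(v,w) \<in> (adj ends F)\<^sup>*"
    unfolding odot_def comp_def by auto
  have sym: "(a,b) \<in> adj ends F \<Longrightarrow> (b,a) \<in> adj ends F" for a b
    unfolding adj_def by (auto simp: insert_commute)
  have symr: "(a,b) \<in> (adj ends F)\<^sup>* \<Longrightarrow> (b,a) \<in> (adj ends F)\<^sup>*" for a b
  proof (induction rule: rtrancl_induct)
    case base then show ?case by simp
  next
    case (step b c) then show ?case using sym by (meson converse_rtrancl_into_rtrancl)
  qed
  have uw: "(u,w) \<in> (adj ends F)\<^sup>*" using symr[OF u(2)] w(2) by simp
  have "\<exists>a b. a \<in> S \<and> b \<notin> S \<and> (a,b) \<in> adj ends F"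
    if "(u,w) \<in> (adj ends F)\<^sup>*" "u \<in> S" "w \<notin> S" for u w
    using that
  proof (induction rule: rtrancl_induct)
    case base then show ?case by simp
  next
    case (step b c)
    then show ?case by (cases "b \<in> S") auto
  qed
  from this[OF uw u(1) w(1)] obtain a b where ab: "a \<in> S" "b \<notin> S" "(a,b) \<in> adj ends F"
    by blast
  then obtain e where e: "e \<in> F" "ends e = {a,b}" unfolding adj_def by auto
  have "ends e \<inter> S = {a}" using e ab by auto
  then have "e \<in> cut ends E S" using e that unfolding cut_def by auto
  then show ?thesis using e by auto
qed

lemma swap_load:
  assumes "finite V" "finite F"
  shows "(\<Sum>e\<in>F. load V ends E y e)
     = (\<Sum>S\<in>Pow V. real (card (cut ends E S \<inter> F)) * y S)"
proof -
  have "(\<Sum>e\<in>F. load V ends E y e) = (\<Sum>e\<in>F. \<Sum>S\<in>Pow V. if e \<in> cut ends E S then y S else 0)"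
    unfolding load_def
    by (rule sum.cong[OF refl], subst sum.inter_filter[symmetric]) (auto simp: assms intro!: sum.cong)
  also have "\<dots> = (\<Sum>S\<in>Pow V. \<Sum>e\<in>F. if e \<in> cut ends E S then y S else 0)"
    by (rule sum.swap)
  also have "\<dots> = (\<Sum>S\<in>Pow V. real (card (cut ends E S \<inter> F)) * y S)"
  proof (rule sum.cong[OF refl])
    fix S
    have "(\<Sum>e\<in>F. if e \<in> cut ends E S then y S else 0) = (\<Sum>e\<in>{e\<in>F. e \<in> cut ends E S}. y S)"
      by (subst sum.inter_filter[symmetric]) (auto simp: assms)
    also have "{e\<in>F. e \<in> cut ends E S} = cut ends E S \<inter> F" by auto
    finally show "(\<Sum>e\<in>F. if e \<in> cut ends E S then y S else 0) = real (card (cut ends E S \<inter> F)) * y S"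
      by simp
  qed
  finally show ?thesis .
qed

theorem mainTheorem10:
  fixes V :: "'a set" and E :: "'e set" and ends :: "'e \<Rightarrow> 'a set"
    and c :: "'e \<Rightarrow> real" and t :: "'a \<Rightarrow> real"
    and y :: "'a set \<Rightarrow> real" and F :: "'e set"
  assumes "finite V" and "finite E"
    and "\<forall>e\<in>E. ends e \<subseteq> V \<and> card (ends e) = 2"
    and "\<forall>e\<in>E. c e \<ge> 0" and "\<forall>v\<in>V. t v \<ge> 0"
    and "smg_final V E ends c t y"
    and "is_forest ends E F"
  shows "(\<Sum>S \<in> {S. S \<subseteq> V \<and> odotF V ends S F}. y S)
           \<le> (\<Sum>e\<in>F. c e) - UM V ends E c y F / 2"
proof -
  from assms(6) obtain \<tau> Fr where "smg_reach V E ends c t \<tau> Fr y"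
    unfolding smg_final_def by auto
  from smg_inv[OF this assms(4)] have ypos: "\<And>S. y S \<ge> 0"
    and lc: "\<And>e. e \<in> E \<Longrightarrow> load V ends E y e \<le> c e" by auto
  have FE: "F \<subseteq> E" using assms(7) unfolding is_forest_def by auto
  have fF: "finite F" using FE assms(2) finite_subset by auto
  define d where "d S = real (card (cut ends E S \<inter> F))" for S
  have UCnn: "UC V ends E c y F \<ge> 0" unfolding UC_def
    using lc FE by (intro sum_nonneg) auto
  have Lsum: "(\<Sum>e\<in>F. load V ends E y e) = (\<Sum>S\<in>Pow V. d S * y S)"
    unfolding d_def by (rule swap_load[OF assms(1) fF])
  have MCe: "MC V ends E y F = (\<Sum>S\<in>Pow V. if d S \<ge> 2 then d S * y S else 0)"
    unfolding MC_def d_def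
    by (subst sum.inter_filter[symmetric]) (auto simp: assms(1) intro!: sum.cong)
  have cF: "(\<Sum>e\<in>F. c e) = UC V ends E c y F + (\<Sum>e\<in>F. load V ends E y e)"
    unfolding UC_def by (simp add: sum_subtractf)
  have RHS: "(\<Sum>e\<in>F. c e) - UM V ends E c y F / 2
     = UC V ends E c y F / 2 + (\<Sum>S\<in>Pow V. d S * y S - (if d S \<ge> 2 then d S * y S / 2 else 0))"
  proof -
    have h: "(\<Sum>S\<in>Pow V. if d S \<ge> 2 then d S * y S / 2 else 0)
        = (\<Sum>S\<in>Pow V. if d S \<ge> 2 then d S * y S else 0) / 2"
      by (simp add: sum_divide_distrib; rule sum.cong; simp)
    show ?thesis unfolding UM_def using cF Lsum MCe h
      by (simp only: sum_subtractf) (simp add: field_simps)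
  qed
  have LHS: "(\<Sum>S \<in> {S. S \<subseteq> V \<and> odotF V ends S F}. y S)
      = (\<Sum>S\<in>Pow V. if odotF V ends S F then y S else 0)"
    by (subst sum.inter_filter[symmetric]) (auto simp: assms(1) intro!: sum.cong)
  have pt: "(if odotF V ends S F then y S else 0)
        \<le> d S * y S - (if d S \<ge> 2 then d S * y S / 2 else 0)" for S
  proof -
    have d0: "d S \<ge> 0" unfolding d_def by simp
    have dy: "d S * y S \<ge> 0" using d0 ypos by simp
    show ?thesis
    proof (cases "odotF V ends S F")
      case True
      then have "cut ends E S \<inter> F \<noteq> {}" using cut_nonempty FE by blast
      moreover have "finite (cut ends E S \<inter> F)" using fF by simp
      ultimately have "card (cut ends E S \<inter> F) \<ge> 1"
        by (simp add: Suc_le_eq card_gt_0_iff)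
      then have d1: "d S \<ge> 1" unfolding d_def by simp
      show ?thesis
      proof (cases "d S \<ge> 2")
        case True
        have "y S \<le> d S * y S / 2" using True ypos[of S]
          by (metis divide_right_mono mult_right_mono nonzero_mult_div_cancel_left zero_neq_numeral mult.commute order_trans le_divide_eq_numeral1(1) zero_less_numeral)
        then show ?thesis using True \<open>odotF V ends S F\<close> by simp
      next
        case False
        have "d S * y S \<ge> y S" using mult_right_mono[OF d1 ypos[of S]] by simp
        then show ?thesis using False \<open>odotF V ends S F\<close> by simp
      qed
    next
      case False
      then show ?thesis using dy ypos[of S] by auto
    qed
  qed
  have "(\<Sum>S\<in>Pow V. if odotF V ends S F then y S else 0)
     \<le> (\<Sum>S\<in>Pow V. d S * y S - (if d S \<ge> 2 then d S * y S / 2 else 0))"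
    by (rule sum_mono) (rule pt)
  then show ?thesis using LHS RHS UCnn by linarith
qed

end
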